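(* For every odd prime $p$, the graph $ER'(p)$ satisfies $\chi(ER'(p))\ge 4$.
   Context: $\chi$ denotes the chromatic number. Let $p$ be an odd prime and $m=(p-1)/2$. Let $V(ER'(p))$ be the set of nonzero integer vectors $x=(x_1,x_2,x_3)\in\{-m,\dots,-1,0,1,\dots,m\}^3$ whose first nonzero entry equals $1$ (equivalently: take the representatives $[0,0,1]$, $[0,1,a]$, $[1,a,b]$, $a,b\in\{0,\dots,p-1\}$, of the one-dimensional subspaces of $\mathbb{F}_p^3$, and replace every entry $x_i>m$ by $x_i-p$). The graph $ER'(p)$ has this vertex set, with two vertices adjacent iff they are orthogonal as vectors of $\mathbb{R}^3$ under the standard inner product. (For $p=3$, $ER'(3)$ is the 13-vertex orthogonality graph $G_{13}$ of the vectors in $\{0,\pm1\}^3$ with first nonzero entry $1$.) *)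

theory Defs
  imports Main "HOL-Computational_Algebra.Primes"
begin

type_synonym vec3 = "int \<times> int \<times> int"

definition first_nonzero_is_one :: "vec3 \<Rightarrow> bool" where
  "first_nonzero_is_one v = (case v of (a, b, c) \<Rightarrow>
      (if a \<noteq> 0 then a = 1 else if b \<noteq> 0 then b = 1 else c = 1))"

definition ERp_verts :: "nat \<Rightarrow> vec3 set" where
  "ERp_verts p = (let m = (int p - 1) div 2 in
     {(a, b, c). a \<in> {-m..m} \<and> b \<in> {-m..m} \<and> c \<in> {-m..m} \<and>
                 (a, b, c) \<noteq> (0, 0, 0) \<and> first_nonzero_is_one (a, b, c)})"

definition dot3 :: "vec3 \<Rightarrow> vec3 \<Rightarrow> int" where
  "dot3 u v = (case u of (a, b, c) \<Rightarrow> case v of (x, y, z) \<Rightarrow> a * x + b * y + c * z)"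

definition ERp_adj :: "nat \<Rightarrow> vec3 \<Rightarrow> vec3 \<Rightarrow> bool" where
  "ERp_adj p u v = (u \<in> ERp_verts p \<and> v \<in> ERp_verts p \<and> u \<noteq> v \<and> dot3 u v = 0)"

definition colorable :: "'a set \<Rightarrow> ('a \<Rightarrow> 'a \<Rightarrow> bool) \<Rightarrow> nat \<Rightarrow> bool" where
  "colorable V E k = (\<exists>f :: 'a \<Rightarrow> nat. (\<forall>v\<in>V. f v < k) \<and>
                        (\<forall>u\<in>V. \<forall>v\<in>V. E u v \<longrightarrow> f u \<noteq> f v))"

definition chromatic_number :: "'a set \<Rightarrow> ('a \<Rightarrow> 'a \<Rightarrow> bool) \<Rightarrow> nat" where
  "chromatic_number V E = (LEAST k. colorable V E k)"

end

theory Submission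
  imports Defs
begin

lemma g13_aux: "(\<forall>c0\<in>{0::nat,1,2}. True \<longrightarrow> (\<forall>c2\<in>{0::nat,1,2}. c2 \<noteq> c0 \<longrightarrow> (\<forall>c8\<in>{0::nat,1,2}. c8 \<noteq> c0 \<and> c8 \<noteq> c2 \<longrightarrow> (\<forall>c1\<in>{0::nat,1,2}. c1 \<noteq> c8 \<longrightarrow> (\<forall>c3\<in>{0::nat,1,2}. c3 \<noteq> c8 \<and> c3 \<noteq> c1 \<longrightarrow> (\<forall>c4\<in>{0::nat,1,2}. c4 \<noteq> c1 \<longrightarrow> (\<forall>c9\<in>{0::nat,1,2}. c9 \<noteq> c2 \<and> c9 \<noteq> c4 \<longrightarrow> (\<forall>c7\<in>{0::nat,1,2}. c7 \<noteq> c2 \<and> c7 \<noteq> c9 \<longrightarrow> (\<forall>c6\<in>{0::nat,1,2}. c6 \<noteq> c3 \<and> c6 \<noteq> c7 \<longrightarrow> (\<forall>c11\<in>{0::nat,1,2}. c11 \<noteq> c0 \<and> c11 \<noteq> c4 \<and> c11 \<noteq> c6 \<longrightarrow> (\<forall>c5\<in>{0::nat,1,2}. c5 \<noteq> c0 \<and> c5 \<noteq> c11 \<longrightarrow> (\<forall>c10\<in>{0::nat,1,2}. c10 \<noteq> c3 \<and> c10 \<noteq> c9 \<and> c10 \<noteq> c5 \<longrightarrow> (\<forall>c12\<in>{0::nat,1,2}. c12 \<noteq> c1 \<and> c12 \<noteq> c7 \<and> c12 \<noteq> c5 \<longrightarrow> False)))))))))))))"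
  by simp

lemma g13_comb:
  fixes c0 c1 c2 c3 c4 c5 c6 c7 c8 c9 c10 c11 c12 :: nat
  assumes "c0 < 3" "c1 < 3" "c2 < 3" "c3 < 3" "c4 < 3" "c5 < 3" "c6 < 3" "c7 < 3" "c8 < 3" "c9 < 3" "c10 < 3" "c11 < 3" "c12 < 3"
    and "c0 \<noteq> c2" "c0 \<noteq> c5" "c0 \<noteq> c8" "c0 \<noteq> c11" "c1 \<noteq> c3" "c1 \<noteq> c4" "c1 \<noteq> c8" "c1 \<noteq> c12" "c2 \<noteq> c7" "c2 \<noteq> c8" "c2 \<noteq> c9" "c3 \<noteq> c6" "c3 \<noteq> c8" "c3 \<noteq> c10" "c4 \<noteq> c9" "c4 \<noteq> c11" "c5 \<noteq> c10" "c5 \<noteq> c11" "c5 \<noteq> c12" "c6 \<noteq> c7" "c6 \<noteq> c11" "c7 \<noteq> c9" "c7 \<noteq> c12" "c9 \<noteq> c10"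
  shows False
proof -
  have d0: "c0 \<in> {0,1,2}" using assms(1) by auto
  have d1: "c1 \<in> {0,1,2}" using assms(2) by auto
  have d2: "c2 \<in> {0,1,2}" using assms(3) by auto
  have d3: "c3 \<in> {0,1,2}" using assms(4) by auto
  have d4: "c4 \<in> {0,1,2}" using assms(5) by auto
  have d5: "c5 \<in> {0,1,2}" using assms(6) by auto
  have d6: "c6 \<in> {0,1,2}" using assms(7) by auto
  have d7: "c7 \<in> {0,1,2}" using assms(8) by auto
  have d8: "c8 \<in> {0,1,2}" using assms(9) by auto
  have d9: "c9 \<in> {0,1,2}" using assms(10) by auto
  have d10: "c10 \<in> {0,1,2}" using assms(11) by auto
  have d11: "c11 \<in> {0,1,2}" using assms(12) by auto
  have d12: "c12 \<in> {0,1,2}" using assms(13) by auto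
  show False using g13_aux d0 d1 d2 d3 d4 d5 d6 d7 d8 d9 d10 d11 d12 assms(14-) by blast
qed


lemma vin_lemma:
  assumes "(1::int) \<le> (int p - 1) div 2"
    and "a \<in> {-1..1}" "b \<in> {-1..1}" "c \<in> {-1..1}" "(a,b,c) \<noteq> (0,0,0)"
    and "first_nonzero_is_one (a,b,c)"
  shows "(a,b,c) \<in> ERp_verts p"
  using assms unfolding ERp_verts_def Let_def by auto

lemma fin_verts: "finite (ERp_verts p)"
proof -
  have "ERp_verts p \<subseteq> {-((int p - 1) div 2)..(int p - 1) div 2} \<times> {-((int p - 1) div 2)..(int p - 1) div 2} \<times> {-((int p - 1) div 2)..(int p - 1) div 2}"
    unfolding ERp_verts_def Let_def by auto
  then show ?thesis by (rule finite_subset) auto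
qed

lemma col_exists: "colorable (ERp_verts p) (ERp_adj p) (card (ERp_verts p))"
proof -
  obtain g where g: "bij_betw g (ERp_verts p) {0..<card (ERp_verts p)}"
    using ex_bij_betw_finite_nat[OF fin_verts] by blast
  show ?thesis unfolding colorable_def
  proof (intro exI[of _ g] conjI ballI impI)
    fix v assume "v \<in> ERp_verts p" then show "g v < card (ERp_verts p)"
      using g bij_betwE by fastforce
  next
    fix u v assume "u \<in> ERp_verts p" "v \<in> ERp_verts p" "ERp_adj p u v"
    then show "g u \<noteq> g v" using g unfolding bij_betw_def inj_on_def ERp_adj_def by blast
  qed
qed

theorem mainTheorem5:
  fixes p :: nat
  assumes "prime p" and "odd p"
  shows "chromatic_number (ERp_verts p) (ERp_adj p) \<ge> 4"
proof (rule ccontr)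
  assume "\<not> ?thesis"
  then have lt: "(LEAST k. colorable (ERp_verts p) (ERp_adj p) k) < 4"
    unfolding chromatic_number_def by simp
  have "colorable (ERp_verts p) (ERp_adj p) (LEAST k. colorable (ERp_verts p) (ERp_adj p) k)"
    by (rule LeastI[of "colorable (ERp_verts p) (ERp_adj p)", OF col_exists])
  then obtain f where f1: "\<forall>v\<in>ERp_verts p. f v < (LEAST k. colorable (ERp_verts p) (ERp_adj p) k)"
      and f2: "\<forall>u\<in>ERp_verts p. \<forall>v\<in>ERp_verts p. ERp_adj p u v \<longrightarrow> f u \<noteq> f v"
    unfolding colorable_def by blast
  have "p \<ge> 2" using assms(1) by (rule prime_ge_2_nat)
  moreover have "p \<noteq> 2" using assms(2) by auto
  ultimately have "p \<ge> 3" by linarith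
  then have mge: "(1::int) \<le> (int p - 1) div 2" by linarith
  have m0: "(0, 0, 1) \<in> ERp_verts p" by (rule vin_lemma[OF mge]) (auto simp: first_nonzero_is_one_def)
  have m1: "(0, 1, -1) \<in> ERp_verts p" by (rule vin_lemma[OF mge]) (auto simp: first_nonzero_is_one_def)
  have m2: "(0, 1, 0) \<in> ERp_verts p" by (rule vin_lemma[OF mge]) (auto simp: first_nonzero_is_one_def)
  have m3: "(0, 1, 1) \<in> ERp_verts p" by (rule vin_lemma[OF mge]) (auto simp: first_nonzero_is_one_def)
  have m4: "(1, -1, -1) \<in> ERp_verts p" by (rule vin_lemma[OF mge]) (auto simp: first_nonzero_is_one_def)
  have m5: "(1, -1, 0) \<in> ERp_verts p" by (rule vin_lemma[OF mge]) (auto simp: first_nonzero_is_one_def)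
  have m6: "(1, -1, 1) \<in> ERp_verts p" by (rule vin_lemma[OF mge]) (auto simp: first_nonzero_is_one_def)
  have m7: "(1, 0, -1) \<in> ERp_verts p" by (rule vin_lemma[OF mge]) (auto simp: first_nonzero_is_one_def)
  have m8: "(1, 0, 0) \<in> ERp_verts p" by (rule vin_lemma[OF mge]) (auto simp: first_nonzero_is_one_def)
  have m9: "(1, 0, 1) \<in> ERp_verts p" by (rule vin_lemma[OF mge]) (auto simp: first_nonzero_is_one_def)
  have m10: "(1, 1, -1) \<in> ERp_verts p" by (rule vin_lemma[OF mge]) (auto simp: first_nonzero_is_one_def)
  have m11: "(1, 1, 0) \<in> ERp_verts p" by (rule vin_lemma[OF mge]) (auto simp: first_nonzero_is_one_def)
  have m12: "(1, 1, 1) \<in> ERp_verts p" by (rule vin_lemma[OF mge]) (auto simp: first_nonzero_is_one_def)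
  have fb: "f v < 3" if "v \<in> ERp_verts p" for v using f1 that lt by fastforce
  have fn: "f u \<noteq> f v" if "u \<in> ERp_verts p" "v \<in> ERp_verts p" "dot3 u v = 0" "u \<noteq> v" for u v
    using f2 that unfolding ERp_adj_def by blast
  show False
    apply (rule g13_comb[of "f (0, 0, 1)" "f (0, 1, -1)" "f (0, 1, 0)" "f (0, 1, 1)" "f (1, -1, -1)" "f (1, -1, 0)" "f (1, -1, 1)" "f (1, 0, -1)" "f (1, 0, 0)" "f (1, 0, 1)" "f (1, 1, -1)" "f (1, 1, 0)" "f (1, 1, 1)"])
    apply (rule fb[OF m0])
    apply (rule fb[OF m1])
    apply (rule fb[OF m2])
    apply (rule fb[OF m3])
    apply (rule fb[OF m4])
    apply (rule fb[OF m5])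
    apply (rule fb[OF m6])
    apply (rule fb[OF m7])
    apply (rule fb[OF m8])
    apply (rule fb[OF m9])
    apply (rule fb[OF m10])
    apply (rule fb[OF m11])
    apply (rule fb[OF m12])
    apply (rule fn[OF m0 m2]; simp add: dot3_def)
    apply (rule fn[OF m0 m5]; simp add: dot3_def)
    apply (rule fn[OF m0 m8]; simp add: dot3_def)
    apply (rule fn[OF m0 m11]; simp add: dot3_def)
    apply (rule fn[OF m1 m3]; simp add: dot3_def)
    apply (rule fn[OF m1 m4]; simp add: dot3_def)
    apply (rule fn[OF m1 m8]; simp add: dot3_def)
    apply (rule fn[OF m1 m12]; simp add: dot3_def)
    apply (rule fn[OF m2 m7]; simp add: dot3_def)
    apply (rule fn[OF m2 m8]; simp add: dot3_def)
    apply (rule fn[OF m2 m9]; simp add: dot3_def)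
    apply (rule fn[OF m3 m6]; simp add: dot3_def)
    apply (rule fn[OF m3 m8]; simp add: dot3_def)
    apply (rule fn[OF m3 m10]; simp add: dot3_def)
    apply (rule fn[OF m4 m9]; simp add: dot3_def)
    apply (rule fn[OF m4 m11]; simp add: dot3_def)
    apply (rule fn[OF m5 m10]; simp add: dot3_def)
    apply (rule fn[OF m5 m11]; simp add: dot3_def)
    apply (rule fn[OF m5 m12]; simp add: dot3_def)
    apply (rule fn[OF m6 m7]; simp add: dot3_def)
    apply (rule fn[OF m6 m11]; simp add: dot3_def)
    apply (rule fn[OF m7 m9]; simp add: dot3_def)
    apply (rule fn[OF m7 m12]; simp add: dot3_def)
    apply (rule fn[OF m9 m10]; simp add: dot3_def)
    done
qed

end
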